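(* Let $\alpha\in[0,\pi/2)$, $B,C,D\in M_n$, $A\in\Pi^n_{s,\alpha}$ and $q\in\mathbb{C}$ with $0<|q|\le1$. Then \[ |q|\,w_q(ACB\pm BDA)\le 2\sec(\alpha)\max\{\|C\|,\|D\|\}\,w_q(A)\,\|B\|. \]
   Context: $M_n$ is the algebra of complex $n\times n$ matrices with the operator norm $\|\cdot\|$. For $|q|\le1$, $w_q(A)=\sup\{|\langle Ax,y\rangle|: \|x\|=\|y\|=1,\ \langle x,y\rangle=q\}$. $W(A)=\{\langle Ax,x\rangle:\|x\|=1\}$, $S_\alpha=\{z:\operatorname{Re}z>0,\ |\operatorname{Im}z|\le\tan(\alpha)\operatorname{Re}z\}$ and $\Pi^n_{s,\alpha}=\{A\in M_n: W(A)\subseteq S_\alpha\}$. *)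

theory Defs
  imports "HOL-Analysis.Analysis"
begin

text \<open>Matrices in M_n are modelled as complex^'n^'n (n = CARD('n)).
  The standard inner product on C^n, linear in the first argument.\<close>
definition cinner :: "complex^'n \<Rightarrow> complex^'n \<Rightarrow> complex" where
  "cinner x y = (\<Sum>i\<in>UNIV. x$i * cnj (y$i))"

text \<open>Operator norm (induced by the Euclidean norm on C^n; the library norm on complex^'n is the l2 norm).\<close>
definition opnorm :: "complex^'n^'n \<Rightarrow> real" where
  "opnorm A = onorm (\<lambda>x. A *v x)"

text \<open>q-numerical radius; supremum of the empty set (possible only when n = 1, |q| < 1) taken as 0.\<close>
definition wq :: "complex \<Rightarrow> complex^'n^'n \<Rightarrow> real" where
  "wq q A = (let S = {cmod (cinner (A *v x) y) | x y. norm x = 1 \<and> norm y = 1 \<and> cinner x y = q}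
             in if S = {} then 0 else Sup S)"

definition numrange :: "complex^'n^'n \<Rightarrow> complex set" where
  "numrange A = {cinner (A *v x) x | x. norm x = 1}"

definition sector :: "real \<Rightarrow> complex set" where
  "sector \<alpha> = {z. Re z > 0 \<and> \<bar>Im z\<bar> \<le> tan \<alpha> * Re z}"

definition PiS :: "real \<Rightarrow> (complex^'n^'n) set" where
  "PiS \<alpha> = {A. numrange A \<subseteq> sector \<alpha>}"

end

theory Submission
  imports Defs
begin


lemma cinner_add_left: "cinner (x + y) z = cinner x z + cinner y z"
  by (simp add: cinner_def distrib_right sum.distrib)
lemma cinner_add_right: "cinner z (x + y) = cinner z x + cinner z y"
  by (simp add: cinner_def distrib_left sum.distrib)
lemma cinner_diff_left: "cinner (x - y) z = cinner x z - cinner y z"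
  by (simp add: cinner_def left_diff_distrib sum_subtractf)
lemma cinner_diff_right: "cinner z (x - y) = cinner z x - cinner z y"
  by (simp add: cinner_def right_diff_distrib sum_subtractf)
lemma cinner_scale_left: "cinner (c *s x) z = c * cinner x z"
  by (simp add: cinner_def sum_distrib_left mult.assoc)
lemma cinner_scale_right: "cinner z (c *s x) = cnj c * cinner z x"
  by (simp add: cinner_def sum_distrib_left mult_ac)

lemma cinner_self: "cinner x x = complex_of_real ((norm x)^2)"
proof -
  have "(norm x)^2 = (\<Sum>i\<in>UNIV. (cmod (x$i))^2)"
    by (simp add: norm_vec_def L2_set_def sum_nonneg)
  then show ?thesis
    by (simp add: cinner_def complex_norm_square[symmetric])
qed

lemma cinner_CS: "cmod (cinner x y) \<le> norm x * norm y"
proof -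
  have "cmod (cinner x y) \<le> (\<Sum>i\<in>UNIV. cmod (x$i * cnj (y$i)))"
    unfolding cinner_def by (rule norm_sum)
  also have "\<dots> = (\<Sum>i\<in>UNIV. \<bar>cmod (x$i)\<bar> * \<bar>cmod (y$i)\<bar>)"
    by (simp add: norm_mult)
  also have "\<dots> \<le> norm x * norm y"
    unfolding norm_vec_def by (rule L2_set_mult_ineq)
  finally show ?thesis .
qed

lemma bl_mv: "bounded_linear (\<lambda>x. (A::complex^'n^'m) *v x)"
  using linear_conv_bounded_linear matrix_vector_mul_linear by blast

lemma opnorm_bound: "norm (A *v x) \<le> opnorm A * norm x"
  unfolding opnorm_def by (rule onorm[OF bl_mv])

lemma opnorm_nonneg: "0 \<le> opnorm A"
  unfolding opnorm_def by (rule onorm_pos_le[OF bl_mv])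

lemma mv_scale: "(A::complex^'n^'m) *v (c *s x) = c *s (A *v x)"
  by (rule vector_scalar_commute)



lemma quad:
  "cinner (A *v (u - w *s v)) (u - w *s v) =
     cinner (A *v u) u - cnj w * cinner (A *v u) v - w * cinner (A *v v) u
       + (w * cnj w) * cinner (A *v v) v"
  by (simp add: matrix_vector_mult_diff_distrib mv_scale cinner_diff_left cinner_diff_right
      cinner_scale_left cinner_scale_right algebra_simps)

lemma sector_form:
  assumes "A \<in> PiS \<alpha>" "0 \<le> \<alpha>" "\<alpha> < pi/2"
  shows "0 \<le> Re (cinner (A *v w) w) \<and> cos \<alpha> * \<bar>Im (cinner (A *v w) w)\<bar> \<le> sin \<alpha> * Re (cinner (A *v w) w)"
proof (cases "w = 0")
  case True
  then show ?thesis by (simp add: cinner_def)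
next
  case False
  define c where "c = complex_of_real (1 / norm w)"
  have nw: "norm w > 0" using False by simp
  have cnjc: "cnj c = c" by (simp add: c_def)
  have "norm (c *s w) = 1"
  proof -
    have "c *s w = (1 / norm w) *\<^sub>R w"
      unfolding vec_eq_iff by (auto simp: c_def scaleR_conv_of_real[where 'a=complex])
    then show ?thesis using nw by simp
  qed
  then have "cinner (A *v (c *s w)) (c *s w) \<in> sector \<alpha>"
    using assms(1) unfolding PiS_def numrange_def by blast
  moreover have "cinner (A *v (c *s w)) (c *s w) = complex_of_real (1 / (norm w)^2) * cinner (A *v w) w"
    by (simp add: mv_scale cinner_scale_left cinner_scale_right cnjc c_def power2_eq_square)
  ultimately have h: "Re (cinner (A *v w) w) / (norm w)^2 > 0"
     "\<bar>Im (cinner (A *v w) w) / (norm w)^2\<bar> \<le> tan \<alpha> * (Re (cinner (A *v w) w) / (norm w)^2)"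
    unfolding sector_def by auto
  have cpos: "cos \<alpha> > 0" using assms by (intro cos_gt_zero_pi) auto
  have "Re (cinner (A *v w) w) > 0" using h(1) nw by (simp add: zero_less_divide_iff)
  moreover have "\<bar>Im (cinner (A *v w) w)\<bar> \<le> tan \<alpha> * Re (cinner (A *v w) w)"
    using h(2) nw by (simp add: abs_div field_simps)
  then have "cos \<alpha> * \<bar>Im (cinner (A *v w) w)\<bar> \<le> sin \<alpha> * Re (cinner (A *v w) w)"
    using cpos by (simp add: tan_def field_simps)
  ultimately show ?thesis by simp
qed



lemma absh: "(c::real) \<ge> 0 \<Longrightarrow> c * \<bar>x\<bar> \<le> y \<Longrightarrow> c * x \<le> y \<and> - (c * x) \<le> y"
  by (metis abs_ge_self abs_ge_minus_self mult_left_mono order.trans mult_minus_right)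

lemma core:
  assumes hyp: "\<And>w. 0 \<le> Re (cinner (A *v w) w) \<and> cos \<alpha> * \<bar>Im (cinner (A *v w) w)\<bar> \<le> sin \<alpha> * Re (cinner (A *v w) w)"
    and a0: "0 \<le> \<alpha>" and a1: "\<alpha> < pi/2"
  shows "2 * cos \<alpha> * cmod (cinner (A *v u) v) \<le> Re (cinner (A *v u) u) + Re (cinner (A *v v) v)"
proof -
  define p where "p = cinner (A *v u) v"
  define r where "r = cinner (A *v v) u"
  define E where "E = cinner (A *v u) u + cinner (A *v v) v"
  define \<sigma> where "\<sigma> = sgn p"
  have Q: "cmod w = 1 \<Longrightarrow> cinner (A *v (u - w *s v)) (u - w *s v) = E - cnj w * p - w * r" for w
    unfolding quad p_def r_def E_def by (simp add: complex_norm_square[symmetric])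
  have ReE: "Re E = Re (cinner (A *v u) u) + Re (cinner (A *v v) v)" by (simp add: E_def)
  show ?thesis
  proof (cases "p = 0")
    case True
    then show ?thesis using hyp[of u] hyp[of v] by (simp add: p_def)
  next
    case pn: False
    have s1: "cmod \<sigma> = 1" using pn by (simp add: \<sigma>_def norm_sgn)
    have s2: "cnj \<sigma> * p = complex_of_real (cmod p)"
    proof -
      have e: "p * cnj p = (complex_of_real (cmod p))^2" by (metis complex_norm_square of_real_power)
      have "complex_of_real (cmod p) \<noteq> 0" using pn by simp
      then show ?thesis using e
        by (simp add: \<sigma>_def sgn_div_norm scaleR_conv_of_real field_simps power2_eq_square)
    qed
    show ?thesis
    proof (cases "\<alpha> = 0")
      case True
      have im0: "Im (cinner (A *v w) w) = 0" for w using hyp[of w] True by simp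
      have q1: "cinner (A *v (u - (-1) *s v)) (u - (-1) *s v) = E + p + r"
        unfolding quad p_def r_def E_def by simp
      have q2: "cinner (A *v (u - (-\<i>) *s v)) (u - (-\<i>) *s v) = E - \<i> * p + \<i> * r"
        unfolding quad p_def r_def E_def by simp
      have ImE: "Im E = 0" using im0[of u] im0[of v] by (simp add: E_def)
      have "Im (E + p + r) = 0" "Im (E - \<i> * p + \<i> * r) = 0"
        using im0[of "u - (-1) *s v"] im0[of "u - (-\<i>) *s v"] q1 q2 by auto
      then have rr: "r = cnj p" using ImE by (simp add: complex_eq_iff)
      have "0 \<le> Re (E - cnj \<sigma> * p - \<sigma> * r)"
        using hyp[of "u - \<sigma> *s v"] Q[OF s1] by simp
      moreover have "\<sigma> * r = complex_of_real (cmod p)"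
        using s2 rr by (metis complex_cnj_cnj complex_cnj_mult complex_cnj_complex_of_real)
      ultimately have "0 \<le> Re E - 2 * cmod p" using s2 by (simp only: ) simp
      then show ?thesis using True by (simp add: ReE p_def)
    next
      case False
      have sp: "sin \<alpha> > 0" using False a0 a1 by (intro sin_gt_zero) auto
      define w1 where "w1 = cis \<alpha> * \<sigma>"
      define w2 where "w2 = cis (-\<alpha>) * \<sigma>"
      have m1: "cmod w1 = 1" "cmod w2 = 1" using s1 by (simp_all add: w1_def w2_def norm_mult)
      have cge: "cos \<alpha> \<ge> 0" using a0 a1 by (intro cos_ge_zero) auto
      define t where "t = \<sigma> * r"
      have z1: "E - cnj w1 * p - w1 * r = E - cis (-\<alpha>) * complex_of_real (cmod p) - cis \<alpha> * t"
        using s2 by (simp add: w1_def t_def cis_cnj mult.assoc)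
      have z2: "E - cnj w2 * p - w2 * r = E - cis \<alpha> * complex_of_real (cmod p) - cis (-\<alpha>) * t"
        using s2 by (simp add: w2_def t_def cis_cnj mult.assoc)
      have h1: "cos \<alpha> * Im (E - cnj w1 * p - w1 * r) \<le> sin \<alpha> * Re (E - cnj w1 * p - w1 * r)"
        using hyp[of "u - w1 *s v"] Q[OF m1(1)] absh[OF cge] by auto
      have h2: "- (cos \<alpha> * Im (E - cnj w2 * p - w2 * r)) \<le> sin \<alpha> * Re (E - cnj w2 * p - w2 * r)"
        using hyp[of "u - w2 *s v"] Q[OF m1(2)] absh[OF cge] by auto
      have "0 \<le> 2 * sin \<alpha> * Re E - 4 * sin \<alpha> * cos \<alpha> * cmod p"
        using h1 h2 unfolding z1 z2 by (simp add: cis.sel algebra_simps)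
      then have "0 \<le> 2 * sin \<alpha> * (Re E - 2 * cos \<alpha> * cmod p)" by (simp add: algebra_simps)
      then have "0 \<le> Re E - 2 * cos \<alpha> * cmod p" using sp by (simp add: zero_le_mult_iff)
      then show ?thesis by (simp add: ReE p_def)
    qed
  qed
qed


lemma norm_smult: "norm (c *s (x::complex^'n)) = cmod c * norm x"
  unfolding norm_vec_def by (simp add: norm_mult L2_set_right_distrib)

lemma cinner_cnj: "cinner y x = cnj (cinner x y)"
  by (simp add: cinner_def mult.commute)

lemma cinner_axis: "cinner x (axis i 1) = x $ i"
proof -
  have "cinner x (axis i 1) = (\<Sum>k\<in>UNIV. if k = i then x $ i else 0)"
    unfolding cinner_def axis_def by (intro sum.cong) auto
  then show ?thesis by simp
qed

lemma two_idx:
  assumes "norm (x0::complex^'n) = 1" "norm y0 = 1" "cinner x0 y0 = q" "cmod q < 1"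
  shows "\<exists>i j::'n. i \<noteq> j"
proof (rule ccontr)
  assume "\<not> ?thesis"
  then obtain i :: 'n where U: "UNIV = {i}" by auto
  have "norm x0 = cmod (x0 $ i)" unfolding norm_vec_def U by simp
  moreover have "norm y0 = cmod (y0 $ i)" unfolding norm_vec_def U by simp
  moreover have "q = x0 $ i * cnj (y0 $ i)" using assms(3) unfolding cinner_def U by simp
  ultimately have "cmod q = 1" using assms by (simp add: norm_mult)
  then show False using assms by simp
qed

lemma orth_exists:
  assumes "\<exists>i j::'n. i \<noteq> j"
  shows "\<exists>z::complex^'n. norm z = 1 \<and> cinner x z = 0"
proof -
  obtain i j :: 'n where ij: "i \<noteq> j" using assms by blast
  obtain z0 :: "complex^'n" where z0: "z0 \<noteq> 0" "cinner x z0 = 0"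
  proof (cases "x $ i = 0 \<and> x $ j = 0")
    case True
    have "axis i (1::complex) \<noteq> 0" by (metis axis_nth one_neq_zero zero_index)
    then show ?thesis using that[of "axis i 1"] True by (simp add: cinner_axis)
  next
    case False
    define z where "z = cnj (x$j) *s axis i 1 - cnj (x$i) *s axis j 1"
    have "z $ i = cnj (x$j)" "z $ j = - cnj (x$i)" using ij by (simp_all add: z_def axis_def)
    then have "z \<noteq> 0" using False by (metis complex_cnj_zero_iff neg_equal_0_iff_equal zero_index)
    moreover have "cinner x z = 0"
      by (simp add: z_def cinner_diff_right cinner_scale_right cinner_axis)
    ultimately show ?thesis using that by blast
  qed
  define z where "z = complex_of_real (1 / norm z0) *s z0"
  have "norm z = 1" using z0 by (simp add: z_def norm_smult norm_divide)
  moreover have "cinner x z = 0" using z0 by (simp add: z_def cinner_scale_right)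
  ultimately show ?thesis by blast
qed



lemma wq_empty: "\<not> (\<exists>x y::complex^'n. norm x = 1 \<and> norm y = 1 \<and> cinner x y = q) \<Longrightarrow> wq q (X::complex^'n^'n) = 0"
proof -
  assume a: "\<not> (\<exists>x y::complex^'n. norm x = 1 \<and> norm y = 1 \<and> cinner x y = q)"
  have "{cmod (cinner (X *v x) y) | x y. norm x = 1 \<and> norm y = 1 \<and> cinner x y = q} = {}"
    using a by blast
  then show ?thesis unfolding wq_def Let_def by simp
qed

lemma wq_le:
  assumes "\<And>x y. norm x = 1 \<Longrightarrow> norm y = 1 \<Longrightarrow> cinner x y = q \<Longrightarrow> cmod (cinner (X *v x) y) \<le> b"
    and "0 \<le> b"
  shows "wq q X \<le> b"
proof -
  let ?S = "{cmod (cinner (X *v x) y) | x y. norm x = 1 \<and> norm y = 1 \<and> cinner x y = q}"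
  have "Sup ?S \<le> b" if ne: "?S \<noteq> {}"
    using ne assms(1) by (intro cSup_least) auto
  then show ?thesis unfolding wq_def Let_def using assms(2) by auto
qed

lemma elem_bound: "norm x = 1 \<Longrightarrow> norm y = 1 \<Longrightarrow> cmod (cinner (X *v x) y) \<le> opnorm X"
  using cinner_CS[of "X *v x" y] opnorm_bound[of X x] by simp

lemma wq_ge:
  assumes "norm x = 1" "norm y = 1" "cinner x y = q"
  shows "cmod (cinner (X *v x) y) \<le> wq q X"
proof -
  let ?S = "{cmod (cinner (X *v x) y) | x y. norm x = 1 \<and> norm y = 1 \<and> cinner x y = q}"
  have "bdd_above ?S" using elem_bound[of _ _ X] by (auto intro!: bdd_aboveI)
  moreover have m: "cmod (cinner (X *v x) y) \<in> ?S" using assms by blast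
  ultimately have "cmod (cinner (X *v x) y) \<le> Sup ?S" by (intro cSup_upper m)
  then show ?thesis using m unfolding wq_def Let_def by auto
qed

lemma wq_nonneg: "0 \<le> wq q (X::complex^'n^'n)"
proof (cases "\<exists>x y::complex^'n. norm x = 1 \<and> norm y = 1 \<and> cinner x y = q")
  case True
  then obtain x y :: "complex^'n" where "norm x = 1" "norm y = 1" "cinner x y = q" by blast
  from wq_ge[OF this, of X] show ?thesis by (meson norm_ge_zero order.trans)
next
  case False
  then show ?thesis by (simp add: wq_empty)
qed

lemma key_q:
  assumes P: "\<exists>x0 y0::complex^'n. norm x0 = 1 \<and> norm y0 = 1 \<and> cinner x0 y0 = q"
    and q1: "cmod q \<le> 1" and nx: "norm (x::complex^'n) = 1"
  shows "cmod q * cmod (cinner (A *v x) x) \<le> wq q A"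
proof (cases "cmod q = 1")
  case True
  define y where "y = cnj q *s x"
  have "norm y = 1" using True nx by (simp add: y_def norm_smult)
  moreover have "cinner x y = q" using nx by (simp add: y_def cinner_scale_right cinner_self)
  ultimately have "cmod (cinner (A *v x) y) \<le> wq q A" using nx by (intro wq_ge) auto
  moreover have "cinner (A *v x) y = q * cinner (A *v x) x" by (simp add: y_def cinner_scale_right)
  ultimately show ?thesis by (simp add: norm_mult)
next
  case False
  then have ql: "cmod q < 1" using q1 by simp
  obtain x0 y0 :: "complex^'n" where "norm x0 = 1" "norm y0 = 1" "cinner x0 y0 = q" using P by blast
  then have "\<exists>i j::'n. i \<noteq> j" using two_idx ql by blast
  then obtain z where z: "norm z = 1" "cinner x z = 0" using orth_exists by blast
  have zx: "cinner z x = 0" using z(2) by (simp add: cinner_cnj[of z x])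
  have xx: "cinner x x = 1" and zz: "cinner z z = 1" using nx z by (simp_all add: cinner_self)
  define s where "s = sqrt (1 - (cmod q)^2)"
  have "(cmod q)^2 \<le> 1" using q1 by (simp add: power_le_one)
  then have s2: "s^2 = 1 - (cmod q)^2" unfolding s_def by simp
  have yy: "\<And>e::real. e^2 = 1 \<Longrightarrow> norm (cnj q *s x + complex_of_real (e * s) *s z) = 1 \<and>
              cinner x (cnj q *s x + complex_of_real (e * s) *s z) = q"
  proof -
    fix e :: real assume e: "e^2 = 1"
    let ?y = "cnj q *s x + complex_of_real (e * s) *s z"
    have "cinner ?y ?y = complex_of_real ((cmod q)^2 + e^2 * s^2)"
      using xx zz z zx by (simp add: cinner_add_left cinner_add_right cinner_scale_left cinner_scale_right
          complex_norm_square[symmetric] power_mult_distrib power2_eq_square)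
    then have "complex_of_real ((norm ?y)^2) = 1" using e s2 by (simp add: cinner_self)
    then have "(norm ?y)^2 = 1" by (metis of_real_eq_1_iff)
    then have "norm ?y = 1" using norm_ge_zero[of ?y] by (simp add: power2_eq_1_iff del: norm_ge_zero)
    moreover have "cinner x ?y = q" using nx z by (simp add: cinner_add_right cinner_scale_right cinner_self)
    ultimately show "norm ?y = 1 \<and> cinner x ?y = q" by simp
  qed
  define P0 where "P0 = q * cinner (A *v x) x"
  define Q0 where "Q0 = complex_of_real s * cinner (A *v x) z"
  have "cmod (cinner (A *v x) (cnj q *s x + complex_of_real (1 * s) *s z)) \<le> wq q A"
    using yy[of 1] nx by (intro wq_ge) auto
  moreover have "cmod (cinner (A *v x) (cnj q *s x + complex_of_real ((-1) * s) *s z)) \<le> wq q A"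
    using yy[of "-1"] nx by (intro wq_ge) auto
  moreover have "cinner (A *v x) (cnj q *s x + complex_of_real (1 * s) *s z) = P0 + Q0"
    by (simp add: P0_def Q0_def cinner_add_right cinner_scale_right)
  moreover have "cinner (A *v x) (cnj q *s x + complex_of_real ((-1) * s) *s z) = P0 - Q0"
    by (simp add: P0_def Q0_def cinner_add_right cinner_diff_right cinner_scale_right)
  ultimately have "cmod (P0 + Q0) \<le> wq q A" "cmod (P0 - Q0) \<le> wq q A" by auto
  moreover have "2 * cmod P0 \<le> cmod (P0 + Q0) + cmod (P0 - Q0)"
    using norm_triangle_ineq[of "P0 + Q0" "P0 - Q0"] by simp
  ultimately have "cmod P0 \<le> wq q A" by simp
  then show ?thesis by (simp add: P0_def norm_mult)
qed



lemma A_bound: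
  assumes "A \<in> PiS \<alpha>" "0 \<le> \<alpha>" "\<alpha> < pi/2"
    and P: "\<exists>x0 y0::complex^'n. norm x0 = 1 \<and> norm y0 = 1 \<and> cinner x0 y0 = q"
    and q1: "cmod q \<le> 1"
  shows "cos \<alpha> * cmod q * norm ((A::complex^'n^'n) *v w) \<le> wq q A * norm w"
proof -
  have hyp: "\<And>w. 0 \<le> Re (cinner (A *v w) w) \<and> cos \<alpha> * \<bar>Im (cinner (A *v w) w)\<bar> \<le> sin \<alpha> * Re (cinner (A *v w) w)"
    using sector_form[OF assms(1-3)] by blast
  have cpos: "cos \<alpha> > 0" using assms(2,3) by (intro cos_gt_zero_pi) auto
  have wn: "0 \<le> wq q A" by (rule wq_nonneg)
  have unit: "cos \<alpha> * cmod q * norm (A *v u) \<le> wq q A" if nu: "norm u = 1" for u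
  proof (cases "A *v u = 0")
    case True then show ?thesis using wn by simp
  next
    case False
    define v where "v = complex_of_real (1 / norm (A *v u)) *s (A *v u)"
    have nv: "norm v = 1" using False by (simp add: v_def norm_smult norm_divide)
    have "cinner (A *v u) v = complex_of_real (1 / norm (A *v u)) * complex_of_real ((norm (A *v u))^2)"
      by (simp add: v_def cinner_scale_right cinner_self)
    also have "\<dots> = complex_of_real (norm (A *v u))" using False by (simp add: power2_eq_square)
    finally have cv: "cmod (cinner (A *v u) v) = norm (A *v u)" by simp
    have c1: "2 * cos \<alpha> * norm (A *v u) \<le> Re (cinner (A *v u) u) + Re (cinner (A *v v) v)"
      using core[OF hyp assms(2,3), of u v] cv by simp
    have "Re (cinner (A *v u) u) + Re (cinner (A *v v) v) \<le> cmod (cinner (A *v u) u) + cmod (cinner (A *v v) v)"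
      by (intro add_mono complex_Re_le_cmod)
    with c1 have "cmod q * (2 * cos \<alpha> * norm (A *v u)) \<le> cmod q * (cmod (cinner (A *v u) u) + cmod (cinner (A *v v) v))"
      by (intro mult_left_mono) auto
    also have "\<dots> \<le> wq q A + wq q A"
      using key_q[OF P q1 nu, of A] key_q[OF P q1 nv, of A] by (simp add: distrib_left)
    finally show ?thesis by (simp add: algebra_simps)
  qed
  show ?thesis
  proof (cases "w = 0")
    case True then show ?thesis by simp
  next
    case False
    define u where "u = complex_of_real (1 / norm w) *s w"
    have nu: "norm u = 1" using False by (simp add: u_def norm_smult norm_divide)
    have "norm (A *v u) = norm (A *v w) / norm w"
      by (simp add: u_def mv_scale norm_smult norm_divide)
    with unit[OF nu] have "cos \<alpha> * cmod q * (norm (A *v w) / norm w) \<le> wq q A" by simp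
    then show ?thesis using False by (simp add: field_simps)
  qed
qed

lemma main_gen:
  assumes "A \<in> PiS \<alpha>" "0 \<le> \<alpha>" "\<alpha> < pi/2" "0 < cmod q" "cmod q \<le> 1"
    and X: "\<And>x. norm ((X::complex^'n^'n) *v x) \<le> norm (A *v (C *v (B *v x))) + norm (B *v (D *v (A *v x)))"
  shows "cmod q * wq q X \<le> 2 * (1 / cos \<alpha>) * max (opnorm C) (opnorm D) * wq q A * opnorm B"
proof -
  have cpos: "cos \<alpha> > 0" using assms(2,3) by (intro cos_gt_zero_pi) auto
  have wn: "0 \<le> wq q A" by (rule wq_nonneg)
  define M where "M = max (opnorm C) (opnorm D)"
  have M0: "0 \<le> M" "opnorm C \<le> M" "opnorm D \<le> M" using opnorm_nonneg[of C] by (auto simp: M_def)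
  have B0: "0 \<le> opnorm B" by (rule opnorm_nonneg)
  have rhs0: "0 \<le> 2 * (1 / cos \<alpha>) * M * wq q A * opnorm B"
    using cpos M0 wn B0 by simp
  show ?thesis
  proof (cases "\<exists>x0 y0::complex^'n. norm x0 = 1 \<and> norm y0 = 1 \<and> cinner x0 y0 = q")
    case False
    then show ?thesis using rhs0 by (simp add: wq_empty M_def)
  next
    case P: True
    define c where "c = cos \<alpha> * cmod q"
    have c0: "c > 0" using cpos assms(4) by (simp add: c_def)
    have Ab: "c * norm (A *v w) \<le> wq q A * norm w" for w
      unfolding c_def by (rule A_bound[OF assms(1-3) P assms(5)])
    have "c * norm (X *v x) \<le> 2 * M * wq q A * opnorm B" if "norm x = 1" for x
    proof -
      have t1: "c * norm (A *v (C *v (B *v x))) \<le> wq q A * (M * opnorm B)"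
      proof -
        have "norm (C *v (B *v x)) \<le> opnorm C * norm (B *v x)" by (rule opnorm_bound)
        also have "\<dots> \<le> M * opnorm B"
          using opnorm_bound[of B x] that M0 B0 opnorm_nonneg[of C] by (simp add: mult_mono)
        finally have "norm (C *v (B *v x)) \<le> M * opnorm B" .
        then show ?thesis using Ab[of "C *v (B *v x)"] wn by (meson mult_left_mono order.trans)
      qed
      have t2: "c * norm (B *v (D *v (A *v x))) \<le> opnorm B * (M * wq q A)"
      proof -
        have "c * norm (B *v (D *v (A *v x))) \<le> c * (opnorm B * (opnorm D * norm (A *v x)))"
          using opnorm_bound[of B "D *v (A *v x)"] opnorm_bound[of D "A *v x"] B0 c0
          by (meson less_imp_le mult_left_mono order.trans)
        also have "\<dots> = opnorm B * opnorm D * (c * norm (A *v x))" by (simp add: algebra_simps)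
        also have "\<dots> \<le> opnorm B * opnorm D * wq q A"
          using Ab[of x] that B0 opnorm_nonneg[of D] by (simp add: mult_left_mono)
        also have "\<dots> \<le> opnorm B * (M * wq q A)"
          using B0 M0 wn by (simp add: mult_left_mono mult_right_mono mult.assoc[symmetric])
        finally show ?thesis .
      qed
      have "c * norm (X *v x) \<le> c * norm (A *v (C *v (B *v x))) + c * norm (B *v (D *v (A *v x)))"
        using X[of x] c0 by (simp add: distrib_left[symmetric] mult_left_mono)
      also have "\<dots> \<le> 2 * M * wq q A * opnorm B" using t1 t2 by (simp add: algebra_simps)
      finally show ?thesis .
    qed
    then have "wq q X \<le> 2 * M * wq q A * opnorm B / c"
    proof (intro wq_le)
      fix x y assume h: "\<And>x. norm x = 1 \<Longrightarrow> c * norm (X *v x) \<le> 2 * M * wq q A * opnorm B"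
        "norm (x::complex^'n) = 1" "norm (y::complex^'n) = 1" "cinner x y = q"
      have "cmod (cinner (X *v x) y) \<le> norm (X *v x)" using cinner_CS[of "X *v x" y] h(3) by simp
      then show "cmod (cinner (X *v x) y) \<le> 2 * M * wq q A * opnorm B / c"
      proof -
        have "c * cmod (cinner (X *v x) y) \<le> c * norm (X *v x)"
          using \<open>cmod (cinner (X *v x) y) \<le> norm (X *v x)\<close> c0 by (simp add: mult_left_mono)
        then have "c * cmod (cinner (X *v x) y) \<le> 2 * M * wq q A * opnorm B" using h(1)[OF h(2)] by linarith
        then show ?thesis using c0 by (simp add: field_simps)
      qed
    next
      show "0 \<le> 2 * M * wq q A * opnorm B / c" using M0 wn B0 c0 by simp
    qed
    then have "cmod q * wq q X \<le> cmod q * (2 * M * wq q A * opnorm B / c)"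
      using assms(4) by (intro mult_left_mono) auto
    also have "\<dots> = 2 * (1 / cos \<alpha>) * M * wq q A * opnorm B"
      using assms(4) cpos by (simp add: c_def field_simps)
    finally show ?thesis by (simp add: M_def)
  qed
qed

theorem theorem2p18:
  fixes A B C D :: "complex^'n^'n" and q :: complex and \<alpha> :: real
  assumes "0 \<le> \<alpha>" and "\<alpha> < pi / 2"
    and "A \<in> PiS \<alpha>"
    and "0 < cmod q" and "cmod q \<le> 1"
  shows "cmod q * wq q (A ** C ** B + B ** D ** A)
           \<le> 2 * (1 / cos \<alpha>) * max (opnorm C) (opnorm D) * wq q A * opnorm B
       \<and> cmod q * wq q (A ** C ** B - B ** D ** A)
           \<le> 2 * (1 / cos \<alpha>) * max (opnorm C) (opnorm D) * wq q A * opnorm B"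
proof
  show "cmod q * wq q (A ** C ** B + B ** D ** A)
           \<le> 2 * (1 / cos \<alpha>) * max (opnorm C) (opnorm D) * wq q A * opnorm B"
    by (rule main_gen[OF assms(3,1,2,4,5)])
       (simp add: matrix_vector_mult_add_rdistrib matrix_vector_mul_assoc[symmetric] norm_triangle_ineq)
  show "cmod q * wq q (A ** C ** B - B ** D ** A)
           \<le> 2 * (1 / cos \<alpha>) * max (opnorm C) (opnorm D) * wq q A * opnorm B"
    by (rule main_gen[OF assms(3,1,2,4,5)])
       (simp add: matrix_vector_mult_diff_rdistrib matrix_vector_mul_assoc[symmetric] norm_triangle_ineq4)
qed

end
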